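(* There is an absolute constant $C$ such that the following holds: if $\Gamma$ is the incidence graph of a $(v,k,\lambda)$ symmetric design of order $q=k-\lambda\geq 2$, and $n=2v$ is the number of vertices of $\Gamma$, then $\mu(\Gamma)\leq C\sqrt{n}\log n$; that is, $\mu(\Gamma)=O(\sqrt{n}\log n)$.
   Context: A symmetric design with parameters $(v,k,\lambda)$ is a pair $(X,\mathcal{B})$ where $X$ is a set of $v$ points and $\mathcal{B}$ is a family of $k$-subsets of $X$ (blocks) such that any two distinct points lie in exactly $\lambda$ blocks and any two distinct blocks meet in exactly $\lambda$ points. Its order is $q=k-\lambda$. Its incidence graph is the bipartite graph on $X\cup\mathcal{B}$ with $x$ adjacent to $B$ iff $x\in B$. A resolving set of a connected graph is a set $S$ of vertices such that for any two distinct vertices $u,w$ some $s\in S$ has $d(u,s)\neq d(w,s)$; the metric dimension $\mu(\Gamma)$ is the minimum size of a resolving set. *)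

theory Defs
  imports Complex_Main
begin

definition symmetric_design :: "'p set \<Rightarrow> 'p set set \<Rightarrow> nat \<Rightarrow> nat \<Rightarrow> nat \<Rightarrow> bool" where
  "symmetric_design X B v k lam \<longleftrightarrow>
     finite X \<and> card X = v \<and> card B = v \<and>
     (\<forall>b\<in>B. b \<subseteq> X \<and> card b = k) \<and>
     (\<forall>x\<in>X. \<forall>y\<in>X. x \<noteq> y \<longrightarrow> card {b\<in>B. x \<in> b \<and> y \<in> b} = lam) \<and>
     (\<forall>b\<in>B. \<forall>c\<in>B. b \<noteq> c \<longrightarrow> card (b \<inter> c) = lam)"

definition inc_vertices :: "'p set \<Rightarrow> 'p set set \<Rightarrow> ('p + 'p set) set" where
  "inc_vertices X B = Inl ` X \<union> Inr ` B"

fun inc_adj :: "'p set \<Rightarrow> 'p set set \<Rightarrow> ('p + 'p set) \<Rightarrow> ('p + 'p set) \<Rightarrow> bool" where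
  "inc_adj X B (Inl x) (Inr b) \<longleftrightarrow> x \<in> X \<and> b \<in> B \<and> x \<in> b"
| "inc_adj X B (Inr b) (Inl x) \<longleftrightarrow> x \<in> X \<and> b \<in> B \<and> x \<in> b"
| "inc_adj X B _ _ \<longleftrightarrow> False"

definition is_walk :: "('a \<Rightarrow> 'a \<Rightarrow> bool) \<Rightarrow> 'a list \<Rightarrow> 'a \<Rightarrow> 'a \<Rightarrow> bool" where
  "is_walk E p u w \<longleftrightarrow> p \<noteq> [] \<and> hd p = u \<and> last p = w \<and>
     (\<forall>i. Suc i < length p \<longrightarrow> E (p ! i) (p ! Suc i))"

text \<open>Graph distance: least number of edges of a walk (used only on connected graphs).\<close>
definition graph_dist :: "('a \<Rightarrow> 'a \<Rightarrow> bool) \<Rightarrow> 'a \<Rightarrow> 'a \<Rightarrow> nat" where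
  "graph_dist E u w = (LEAST n. \<exists>p. is_walk E p u w \<and> length p = Suc n)"

definition resolving_set :: "'a set \<Rightarrow> ('a \<Rightarrow> 'a \<Rightarrow> bool) \<Rightarrow> 'a set \<Rightarrow> bool" where
  "resolving_set V E S \<longleftrightarrow> S \<subseteq> V \<and>
     (\<forall>u\<in>V. \<forall>w\<in>V. u \<noteq> w \<longrightarrow> (\<exists>s\<in>S. graph_dist E u s \<noteq> graph_dist E w s))"

definition metric_dimension :: "'a set \<Rightarrow> ('a \<Rightarrow> 'a \<Rightarrow> bool) \<Rightarrow> nat" where
  "metric_dimension V E = (LEAST m. \<exists>S. resolving_set V E S \<and> finite S \<and> card S = m)"

end

theory Submission
  imports Defs
begin


lemma card_filter_sum:
  "finite U \<Longrightarrow> card {x\<in>U. P x} = (\<Sum>x\<in>U. if P x then 1 else (0::nat))"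
  by (simp add: sum.inter_filter[symmetric])

lemma double_count:
  assumes "finite U" "finite W"
  shows "(\<Sum>u\<in>U. card {w\<in>W. R u w}) = (\<Sum>w\<in>W. card {u\<in>U. R u w})"
proof -
  have "(\<Sum>u\<in>U. card {w\<in>W. R u w}) = (\<Sum>u\<in>U. \<Sum>w\<in>W. if R u w then 1 else (0::nat))"
    using assms by (simp add: card_filter_sum)
  also have "\<dots> = (\<Sum>w\<in>W. \<Sum>u\<in>U. if R u w then 1 else (0::nat))"
    by (rule sum.swap)
  also have "\<dots> = (\<Sum>w\<in>W. card {u\<in>U. R u w})"
    using assms by (simp add: card_filter_sum)
  finally show ?thesis .
qed

lemma hitting:
  assumes U: "finite U" and m: "m > 0"
  shows "finite F \<Longrightarrow> F \<noteq> {} \<Longrightarrow> \<forall>A\<in>F. A \<subseteq> U \<and> m \<le> card A \<Longrightarrow>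
    \<exists>H\<subseteq>U. (\<forall>A\<in>F. A \<inter> H \<noteq> {}) \<and>
       real (card H) \<le> real (card U) / real m * ln (real (card F)) + 1"
proof (induction "card F" arbitrary: F rule: less_induct)
  case less
  define N where "N = card U"
  from less.prems obtain A0 where A0: "A0 \<in> F" by auto
  with less.prems m have "A0 \<noteq> {}" by (metis card.empty not_le)
  with A0 less.prems U have Npos: "N > 0" unfolding N_def
    by (metis card_gt_0_iff finite_subset subset_empty)
  have "(\<Sum>e\<in>U. card {A\<in>F. e \<in> A}) = (\<Sum>A\<in>F. card {e\<in>U. e \<in> A})"
    using double_count[OF U less.prems(1)] .
  also have "\<dots> = (\<Sum>A\<in>F. card A)"
    using less.prems(3) by (intro sum.cong) (auto intro!: arg_cong[where f=card])
  finally have sumeq: "(\<Sum>e\<in>U. card {A\<in>F. e \<in> A}) = (\<Sum>A\<in>F. card A)" .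
  have "card F * m \<le> (\<Sum>A\<in>F. card A)"
    using less.prems(3) sum_bounded_below[of F m card] by auto
  have "\<exists>e\<in>U. m * card F \<le> N * card {A\<in>F. e \<in> A}"
  proof (rule ccontr)
    assume "\<not> ?thesis"
    hence "\<forall>e\<in>U. N * card {A\<in>F. e \<in> A} < m * card F" by auto
    hence "(\<Sum>e\<in>U. N * card {A\<in>F. e \<in> A}) < (\<Sum>e\<in>U. m * card F)"
      using U Npos unfolding N_def by (intro sum_strict_mono) auto
    hence "N * (\<Sum>e\<in>U. card {A\<in>F. e \<in> A}) < N * (m * card F)"
      by (simp add: sum_distrib_left N_def)
    hence "(\<Sum>e\<in>U. card {A\<in>F. e \<in> A}) < m * card F" by simp
    with sumeq \<open>card F * m \<le> _\<close> show False by (simp add: mult.commute)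
  qed
  then obtain e where e: "e \<in> U" and eb: "m * card F \<le> N * card {A\<in>F. e \<in> A}" by auto
  define G where "G = {A\<in>F. e \<in> A}"
  define F' where "F' = {A\<in>F. e \<notin> A}"
  have FG: "F' = F - G" unfolding F'_def G_def by auto
  have finG: "finite G" using less.prems(1) unfolding G_def by auto
  have cardF': "card F' = card F - card G"
    unfolding FG using finG by (intro card_Diff_subset) (auto simp: G_def)
  have cFpos: "card F > 0" using less.prems by (simp add: card_gt_0_iff)
  have Gpos: "card G > 0"
  proof -
    have "m * card F > 0" using m cFpos by simp
    with eb show ?thesis unfolding G_def by (metis gr0I mult_0_right not_le)
  qed
  have lnF: "ln (real (card F)) \<ge> 0" using cFpos by simp
  show ?case
  proof (cases "F' = {}")
    case True
    have "\<forall>A\<in>F. A \<inter> {e} \<noteq> {}" using True unfolding F'_def by auto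
    moreover have "real (card {e}) \<le> real (card U) / real m * ln (real (card F)) + 1"
      using lnF by simp
    ultimately show ?thesis using e by blast
  next
    case False
    have lt: "card F' < card F" using cardF' Gpos cFpos by linarith
    have "finite F'" using less.prems(1) unfolding F'_def by auto
    moreover have "\<forall>A\<in>F'. A \<subseteq> U \<and> m \<le> card A" using less.prems(3) unfolding F'_def by auto
    ultimately obtain H' where H': "H' \<subseteq> U" "\<forall>A\<in>F'. A \<inter> H' \<noteq> {}"
      "real (card H') \<le> real (card U) / real m * ln (real (card F')) + 1"
      using less.hyps[OF lt] False by blast
    define H where "H = insert e H'"
    have "H \<subseteq> U" using H' e unfolding H_def by auto
    moreover have "\<forall>A\<in>F. A \<inter> H \<noteq> {}"
      using H'(2) unfolding H_def F'_def by auto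
    moreover have "real (card H) \<le> real (card U) / real m * ln (real (card F)) + 1"
    proof -
      have finH': "finite H'" using H'(1) U finite_subset by blast
      have c1: "real (card H) \<le> real (card H') + 1"
        unfolding H_def using finH' by (simp add: card_insert_if)
      define a where "a = real (card F')"
      define c where "c = real (card F)"
      define g where "g = real (card G)"
      have apos: "a > 0" using False \<open>finite F'\<close> unfolding a_def by (simp add: card_gt_0_iff)
      have cpos: "c > 0" using cFpos unfolding c_def by simp
      have "card G \<le> card F" using less.prems(1) unfolding G_def by (intro card_mono) auto
      hence acg: "a = c - g" unfolding a_def c_def g_def using cardF' by (simp add: of_nat_diff)
      have mcNg: "real m * c \<le> real N * g" unfolding c_def g_def G_def
        using eb by (metis of_nat_le_iff of_nat_mult)
      have "ln a - ln c = ln (a / c)" using apos cpos by (simp add: ln_div)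
      also have "\<dots> \<le> a / c - 1" using apos cpos by (intro ln_le_minus_one) simp
      also have "\<dots> = - (g / c)" using acg cpos by (simp add: diff_divide_distrib)
      also have "\<dots> \<le> - (real m / real N)"
        using mcNg cpos Npos by (simp add: field_simps)
      finally have lnle: "ln a \<le> ln c - real m / real N" by simp
      have "real N / real m * ln a \<le> real N / real m * (ln c - real m / real N)"
        using lnle m by (intro mult_left_mono) auto
      also have "\<dots> = real N / real m * ln c - 1" using m Npos by (simp add: field_simps)
      finally show ?thesis using c1 H'(3) unfolding a_def c_def N_def by linarith
    qed
    ultimately show ?thesis by blast
  qed
qed



lemma design_facts:
  assumes D: "symmetric_design X B v k lam"
  shows "finite X" "card X = v" "card B = v" "\<And>b. b\<in>B \<Longrightarrow> b \<subseteq> X \<and> card b = k"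
    "\<And>x y. x\<in>X \<Longrightarrow> y\<in>X \<Longrightarrow> x\<noteq>y \<Longrightarrow> card {b\<in>B. x \<in> b \<and> y \<in> b} = lam"
    "\<And>b c. b\<in>B \<Longrightarrow> c\<in>B \<Longrightarrow> b\<noteq>c \<Longrightarrow> card (b \<inter> c) = lam"
    "finite B"
proof -
  show "finite X" "card X = v" "card B = v" "\<And>b. b\<in>B \<Longrightarrow> b \<subseteq> X \<and> card b = k"
    "\<And>x y. x\<in>X \<Longrightarrow> y\<in>X \<Longrightarrow> x\<noteq>y \<Longrightarrow> card {b\<in>B. x \<in> b \<and> y \<in> b} = lam"
    "\<And>b c. b\<in>B \<Longrightarrow> c\<in>B \<Longrightarrow> b\<noteq>c \<Longrightarrow> card (b \<inter> c) = lam"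
    using D unfolding symmetric_design_def by auto
  have "B \<subseteq> Pow X" using D unfolding symmetric_design_def by auto
  thus "finite B" using D unfolding symmetric_design_def by (meson finite_Pow_iff finite_subset)
qed

lemma repl_eq:
  assumes D: "symmetric_design X B v k lam" and y: "y \<in> X"
  shows "card {b\<in>B. y \<in> b} * (k - 1) = (v - 1) * lam"
proof -
  note F = design_facts[OF D]
  have "(\<Sum>c\<in>{b\<in>B. y \<in> b}. card {z\<in>X-{y}. z \<in> c}) = (\<Sum>z\<in>X-{y}. card {c\<in>{b\<in>B. y \<in> b}. z \<in> c})"
    using F by (intro double_count) auto
  also have "\<dots> = (\<Sum>z\<in>X-{y}. lam)"
  proof (intro sum.cong refl)
    fix z assume "z \<in> X - {y}"
    hence "card {b\<in>B. y \<in> b \<and> z \<in> b} = lam" using F(5)[of y z] y by auto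
    moreover have "{c\<in>{b\<in>B. y \<in> b}. z \<in> c} = {b\<in>B. y \<in> b \<and> z \<in> b}" by auto
    ultimately show "card {c\<in>{b\<in>B. y \<in> b}. z \<in> c} = lam" by simp
  qed
  also have "\<dots> = (v - 1) * lam" using F y by simp
  finally have 1: "(\<Sum>c\<in>{b\<in>B. y \<in> b}. card {z\<in>X-{y}. z \<in> c}) = (v - 1) * lam" .
  have "(\<Sum>c\<in>{b\<in>B. y \<in> b}. card {z\<in>X-{y}. z \<in> c}) = (\<Sum>c\<in>{b\<in>B. y \<in> b}. k - 1)"
  proof (intro sum.cong refl)
    fix c assume c: "c \<in> {b\<in>B. y \<in> b}"
    hence "{z\<in>X-{y}. z \<in> c} = c - {y}" using F(4)[of c] by auto
    thus "card {z\<in>X-{y}. z \<in> c} = k - 1" using F(4)[of c] c F(1)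
      by (simp add: card_Diff_singleton finite_subset)
  qed
  with 1 show ?thesis by simp
qed

lemma repl_k:
  assumes D: "symmetric_design X B v k lam" and lam: "lam \<ge> 1" and k: "k \<ge> 2" and v: "v \<ge> 2"
    and x: "x \<in> X" and b: "b \<in> B"
  shows "card {c\<in>B. x \<in> c} = k" and "lam * (v - 1) = k * (k - 1)"
proof -
  note F = design_facts[OF D]
  define r where "r = card {c\<in>B. x \<in> c}"
  have rx: "r * (k - 1) = (v - 1) * lam" using repl_eq[OF D x] unfolding r_def .
  have ry: "card {c\<in>B. y \<in> c} = r" if "y \<in> X" for y
  proof -
    have "card {c\<in>B. y \<in> c} * (k - 1) = r * (k - 1)" using repl_eq[OF D that] rx by simp
    thus ?thesis using k by simp
  qed
  have "(\<Sum>c\<in>B-{b}. card {y\<in>b. y \<in> c}) = (\<Sum>y\<in>b. card {c\<in>B-{b}. y \<in> c})"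
    using F b by (intro double_count) (auto intro: finite_subset)
  moreover have "(\<Sum>c\<in>B-{b}. card {y\<in>b. y \<in> c}) = (\<Sum>c\<in>B-{b}. lam)"
  proof (intro sum.cong refl)
    fix c assume "c \<in> B - {b}"
    hence "card (b \<inter> c) = lam" using F(6)[of b c] b by auto
    moreover have "{y\<in>b. y \<in> c} = b \<inter> c" by auto
    ultimately show "card {y\<in>b. y \<in> c} = lam" by simp
  qed
  moreover have "(\<Sum>y\<in>b. card {c\<in>B-{b}. y \<in> c}) = (\<Sum>y\<in>b. r - 1)"
  proof (intro sum.cong refl)
    fix y assume y: "y \<in> b"
    have "{c\<in>B-{b}. y \<in> c} = {c\<in>B. y \<in> c} - {b}" by auto
    moreover have "b \<in> {c\<in>B. y \<in> c}" using y b by auto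
    ultimately have "card {c\<in>B-{b}. y \<in> c} = card {c\<in>B. y \<in> c} - 1"
      using F(7) by (simp add: card_Diff_singleton)
    thus "card {c\<in>B-{b}. y \<in> c} = r - 1" using ry[of y] y F(4)[OF b] by auto
  qed
  ultimately have eq: "(v - 1) * lam = k * (r - 1)" using F b by (simp add: card_Diff_singleton)
  have "(v - 1) * lam > 0" using v lam by simp
  hence rpos: "r \<ge> 1" using rx by (cases r) auto
  have "k * (r - 1) = r * (k - 1)" using eq rx by simp
  hence "int k * (int r - 1) = int r * (int k - 1)" using rpos k
    by (metis (no_types, lifting) of_nat_1 of_nat_diff of_nat_mult one_le_numeral order_trans)
  hence "int k = int r" by (simp add: algebra_simps)
  thus "r = k" by simp
  thus "lam * (v - 1) = k * (k - 1)" using rx by (simp add: mult.commute)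
qed



lemma alg_bound:
  fixes L K V :: int
  assumes L: "L \<ge> 1" and KL: "K \<ge> L + 2" and KV: "K \<le> V" and eq: "L * (V - 1) = K * (K - 1)"
  shows "V \<le> 5 * (K - L)^2"
proof -
  define Q where "Q = K - L"
  define s where "s = V - K"
  have Q2: "Q \<ge> 2" using KL unfolding Q_def by simp
  have s0: "s \<ge> 0" using KV unfolding s_def by simp
  have qs: "Q * (V - 1) = K * s" unfolding Q_def s_def using eq by (simp add: algebra_simps)
  have ss: "s * (s - 1) = (s - Q) * (V - 1)"
  proof -
    have "(s - Q) * (V - 1) = s * (V - 1) - K * s" using qs by (simp add: algebra_simps)
    also have "\<dots> = s * (s - 1)" unfolding s_def by (simp add: algebra_simps)
    finally show ?thesis by simp
  qed
  have V3: "V \<ge> 3" using L KL KV by simp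
  have sQ: "s \<ge> Q + 1"
  proof (rule ccontr)
    assume "\<not> ?thesis"
    hence "s - Q \<le> 0" by simp
    hence "(s - Q) * (V - 1) \<le> 0" using V3 by (simp add: mult_nonpos_nonneg)
    moreover have "s * (s - 1) \<ge> 0" using s0 by (cases "s = 0") auto
    ultimately have "s * (s - 1) = 0" "(s - Q) * (V - 1) = 0" using ss by auto
    hence "s = Q" "s = 0 \<or> s = 1" using V3 by auto
    with Q2 show False by auto
  qed
  have "s * (s - 1) \<ge> V - 1" using ss sQ V3 by (simp add: mult_right_mono)
  hence sbig: "s * s \<ge> V - 1" using s0 by (simp add: algebra_simps)
  have "L * (V - 1) \<ge> 1 * (V - 1)" using L V3 by (intro mult_right_mono) auto
  hence "K * (K - 1) \<ge> V - 1" using eq by simp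
  hence kbig: "K * K \<ge> V - 1" using KL L by (simp add: algebra_simps)
  define m where "m = min K s"
  define M where "M = max K s"
  have m0: "m \<ge> 0" unfolding m_def using s0 KL L by simp
  have mm: "m * m \<ge> V - 1" unfolding m_def using sbig kbig by (simp add: min_def)
  have KsmM: "K * s = m * M" unfolding m_def M_def by (simp add: min_def max_def mult.commute)
  have M: "2 * M \<ge> V - 1" unfolding M_def s_def by (simp add: max_def)
  have "2 * Q * (V - 1) = m * (2 * M)" using qs KsmM by simp
  also have "\<dots> \<ge> m * (V - 1)" using M m0 by (simp add: mult_left_mono)
  finally have "2 * Q * (V - 1) \<ge> m * (V - 1)" .
  hence mQ: "m \<le> 2 * Q" using V3 by (simp add: mult_le_cancel_right)
  have "m * m \<le> (2 * Q) * (2 * Q)" using mult_mono[OF mQ mQ] m0 Q2 by (simp add: algebra_simps)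
  hence "V - 1 \<le> 4 * Q^2" using mm by (simp add: power2_eq_square)
  moreover have "2 * 2 \<le> Q * Q" using mult_mono[OF Q2 Q2] Q2 by simp
  hence "1 \<le> Q^2" by (simp add: power2_eq_square)
  ultimately show ?thesis unfolding Q_def by simp
qed



lemma walk_single: "is_walk E [u] u u"
  unfolding is_walk_def by simp

lemma walk_cons: "E u w \<Longrightarrow> is_walk E (w # p) w z \<Longrightarrow> is_walk E (u # w # p) u z"
  unfolding is_walk_def
  by (auto simp: nth_Cons split: nat.splits)

lemma walk_len1: "is_walk E p u w \<Longrightarrow> length p = Suc 0 \<Longrightarrow> u = w"
  unfolding is_walk_def by (cases p) auto

lemma walk_len2: "is_walk E p u w \<Longrightarrow> length p = Suc (Suc 0) \<Longrightarrow> E u w"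
proof -
  assume a: "is_walk E p u w" "length p = Suc (Suc 0)"
  then obtain x y where p: "p = [x, y]" by (auto simp: length_Suc_conv)
  from a show ?thesis unfolding p is_walk_def by (auto elim: allE[of _ 0])
qed

lemma walk_len3: "is_walk E p u w \<Longrightarrow> length p = Suc (Suc (Suc 0)) \<Longrightarrow> \<exists>m. E u m \<and> E m w"
proof -
  assume a: "is_walk E p u w" "length p = Suc (Suc (Suc 0))"
  then obtain x y z where p: "p = [x, y, z]" by (auto simp: length_Suc_conv)
  from a have "E x y" "E y z" unfolding p is_walk_def by (auto elim: allE[of _ 0] allE[of _ 1])
  with a show ?thesis unfolding p is_walk_def by auto
qed

lemma dist_eq:
  assumes "\<exists>p. is_walk E p u w \<and> length p = Suc n"
    and "\<And>m p. m < n \<Longrightarrow> is_walk E p u w \<Longrightarrow> length p = Suc m \<Longrightarrow> False"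
  shows "graph_dist E u w = n"
  unfolding graph_dist_def
  by (rule Least_equality) (use assms in \<open>auto simp: not_less[symmetric]\<close>)

lemma dist_ne:
  assumes "\<exists>n p. is_walk E p u w \<and> length p = Suc n"
    and "\<And>p. is_walk E p u w \<Longrightarrow> length p = Suc m \<Longrightarrow> False"
  shows "graph_dist E u w \<noteq> m"
proof
  assume h: "graph_dist E u w = m"
  from assms(1) have "\<exists>p. is_walk E p u w \<and> length p = Suc (graph_dist E u w)"
    unfolding graph_dist_def by (rule LeastI_ex)
  with h assms(2) show False by auto
qed



lemma w2: "E a b \<Longrightarrow> is_walk E [a, b] a b"
  by (intro walk_cons walk_single)
lemma w3: "E a b \<Longrightarrow> E b c \<Longrightarrow> is_walk E [a, b, c] a c"
  by (intro walk_cons walk_single)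
lemma w4: "E a b \<Longrightarrow> E b c \<Longrightarrow> E c d \<Longrightarrow> is_walk E [a, b, c, d] a d"
  by (intro walk_cons walk_single)

locale des =
  fixes X :: "'p set" and B :: "'p set set" and v k lam :: nat
  assumes D: "symmetric_design X B v k lam" and lam: "lam \<ge> 1" and k2: "k \<ge> 2"
begin

lemmas F = design_facts[OF D]

lemma common_block: "x \<in> X \<Longrightarrow> y \<in> X \<Longrightarrow> x \<noteq> y \<Longrightarrow> \<exists>b\<in>B. x \<in> b \<and> y \<in> b"
  using F(5)[of x y] lam by (metis (mono_tags, lifting) card.empty empty_Collect_eq not_one_le_zero)

lemma common_point: "b \<in> B \<Longrightarrow> c \<in> B \<Longrightarrow> b \<noteq> c \<Longrightarrow> \<exists>y. y \<in> b \<and> y \<in> c"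
  using F(6)[of b c] lam by (metis card.empty disjoint_iff not_one_le_zero)

lemma other_point: "b \<in> B \<Longrightarrow> \<exists>y\<in>b. y \<noteq> x"
proof -
  assume b: "b \<in> B"
  have "card b \<ge> 2" using F(4)[OF b] k2 by simp
  moreover have "b \<subseteq> {x} \<Longrightarrow> card b \<le> 1" using card_mono[of "{x}" b] by simp
  ultimately have "\<not> b \<subseteq> {x}" by linarith
  thus ?thesis by auto
qed

abbreviation "V \<equiv> inc_vertices X B"
abbreviation "E \<equiv> inc_adj X B"
abbreviation "d \<equiv> graph_dist (inc_adj X B)"

lemma conn: "u \<in> V \<Longrightarrow> w \<in> V \<Longrightarrow> \<exists>n p. is_walk E p u w \<and> length p = Suc n"
proof -
  assume u: "u \<in> V" and w: "w \<in> V"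
  show ?thesis
  proof (cases "u = w")
    case True thus ?thesis using walk_single[of E u] by (metis length_Cons list.size(3))
  next
    case False
    show ?thesis
    proof (cases u)
      case (Inl x)
      with u have x: "x \<in> X" unfolding inc_vertices_def by auto
      show ?thesis
      proof (cases w)
        case (Inl y)
        with w have y: "y \<in> X" unfolding inc_vertices_def by auto
        from False Inl \<open>u = Inl x\<close> have "x \<noteq> y" by auto
        then obtain b where "b \<in> B" "x \<in> b" "y \<in> b" using common_block x y by blast
        hence "is_walk E [Inl x, Inr b, Inl y] u w" using x y Inl \<open>u = Inl x\<close> by (auto intro!: w2 w3 w4)
        thus ?thesis by (metis length_Cons)
      next
        case (Inr c)
        with w have c: "c \<in> B" unfolding inc_vertices_def by auto
        show ?thesis
        proof (cases "x \<in> c")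
          case True
          hence "is_walk E [Inl x, Inr c] u w" using x c Inr \<open>u = Inl x\<close> by (auto intro!: w2 w3 w4)
          thus ?thesis by (metis length_Cons)
        next
          case False
          obtain y where y: "y \<in> c" "y \<noteq> x" using other_point[OF c] by blast
          have yX: "y \<in> X" using y c F(4) by auto
          obtain b where "b \<in> B" "x \<in> b" "y \<in> b" using common_block x yX y by metis
          hence "is_walk E [Inl x, Inr b, Inl y, Inr c] u w" using x c y yX Inr \<open>u = Inl x\<close> by (auto intro!: w2 w3 w4)
          thus ?thesis by (metis length_Cons)
        qed
      qed
    next
      case (Inr b)
      with u have b: "b \<in> B" unfolding inc_vertices_def by auto
      show ?thesis
      proof (cases w)
        case (Inr c)
        with w have c: "c \<in> B" unfolding inc_vertices_def by auto
        from False Inr \<open>u = Inr b\<close> have "b \<noteq> c" by auto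
        then obtain y where "y \<in> b" "y \<in> c" using common_point b c by blast
        moreover have "y \<in> X" using \<open>y \<in> b\<close> b F(4) by auto
        ultimately have "is_walk E [Inr b, Inl y, Inr c] u w" using b c Inr \<open>u = Inr b\<close> by (auto intro!: w2 w3 w4)
        thus ?thesis by (metis length_Cons)
      next
        case (Inl x)
        with w have x: "x \<in> X" unfolding inc_vertices_def by auto
        show ?thesis
        proof (cases "x \<in> b")
          case True
          hence "is_walk E [Inr b, Inl x] u w" using x b Inl \<open>u = Inr b\<close> by (auto intro!: w2 w3 w4)
          thus ?thesis by (metis length_Cons)
        next
          case False
          obtain y where y: "y \<in> b" "y \<noteq> x" using other_point[OF b] by blast
          have yX: "y \<in> X" using y b F(4) by auto
          obtain c where "c \<in> B" "x \<in> c" "y \<in> c" using common_block x yX y by metis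
          hence "is_walk E [Inr b, Inl y, Inr c, Inl x] u w" using x b y yX Inl \<open>u = Inr b\<close> by (auto intro!: w2 w3 w4)
          thus ?thesis by (metis length_Cons)
        qed
      qed
    qed
  qed
qed

lemma d0: "d u u = 0"
proof (rule dist_eq)
  show "\<exists>p. is_walk E p u u \<and> length p = Suc 0" using walk_single[of E u] by force
qed auto

lemma dne0: "u \<in> V \<Longrightarrow> w \<in> V \<Longrightarrow> u \<noteq> w \<Longrightarrow> d u w \<noteq> 0"
  by (rule dist_ne[OF conn]) (auto dest: walk_len1)

lemma d1: "E u w \<Longrightarrow> u \<noteq> w \<Longrightarrow> d u w = 1"
  by (rule dist_eq) (auto dest: walk_len1 intro: w2)

lemma dn1: "u \<in> V \<Longrightarrow> w \<in> V \<Longrightarrow> \<not> E u w \<Longrightarrow> d u w \<noteq> 1"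
  by (rule dist_ne[OF conn]) (auto dest: walk_len2)

lemma d2: "x \<in> X \<Longrightarrow> p \<in> X \<Longrightarrow> x \<noteq> p \<Longrightarrow> d (Inl x) (Inl p) = 2"
proof (rule dist_eq)
  assume a: "x \<in> X" "p \<in> X" "x \<noteq> p"
  then obtain b where "b \<in> B" "x \<in> b" "p \<in> b" using common_block by blast
  hence "is_walk E [Inl x, Inr b, Inl p] (Inl x) (Inl p)" using a by (intro w3) auto
  thus "\<exists>q. is_walk E q (Inl x) (Inl p) \<and> length q = Suc 2" by force
next
  fix m q assume a: "x \<noteq> p" "m < 2" "is_walk E q (Inl x) (Inl p)" "length q = Suc m"
  then consider "m = 0" | "m = 1" by linarith
  thus False
  proof cases
    case 1 thus False using a walk_len1[of E q "Inl x" "Inl p"] by auto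
  next
    case 2 thus False using a walk_len2[of E q "Inl x" "Inl p"] by auto
  qed
qed

lemma dn2: "b \<in> B \<Longrightarrow> p \<in> X \<Longrightarrow> d (Inr b) (Inl p) \<noteq> 2"
proof (rule dist_ne[OF conn])
  show "b \<in> B \<Longrightarrow> Inr b \<in> V" "p \<in> X \<Longrightarrow> Inl p \<in> V" unfolding inc_vertices_def by auto
next
  fix q assume "is_walk E q (Inr b) (Inl p)" "length q = Suc 2"
  then obtain m where "E (Inr b) m" "E m (Inl p)" using walk_len3 by (metis numeral_2_eq_2)
  thus False by (cases m) auto
qed

end



context des begin

lemma dinc1: "x \<in> X \<Longrightarrow> c \<in> B \<Longrightarrow> d (Inl x) (Inr c) = 1 \<longleftrightarrow> x \<in> c"
proof -
  assume x: "x \<in> X" and c: "c \<in> B"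
  have V: "Inl x \<in> V" "Inr c \<in> V" using x c unfolding inc_vertices_def by auto
  show ?thesis
  proof (cases "x \<in> c")
    case True thus ?thesis using d1[of "Inl x" "Inr c"] x c by auto
  next
    case False thus ?thesis using dn1[OF V] x c by auto
  qed
qed

lemma dinc2: "p \<in> X \<Longrightarrow> b \<in> B \<Longrightarrow> d (Inr b) (Inl p) = 1 \<longleftrightarrow> p \<in> b"
proof -
  assume x: "p \<in> X" and c: "b \<in> B"
  have V: "Inr b \<in> V" "Inl p \<in> V" using x c unfolding inc_vertices_def by auto
  show ?thesis
  proof (cases "p \<in> b")
    case True thus ?thesis using d1[of "Inr b" "Inl p"] x c by auto
  next
    case False thus ?thesis using dn1[OF V] x c by auto
  qed
qed

lemma resolving:
  assumes P: "P \<subseteq> X" and Q: "Q \<subseteq> B" and Pne: "P \<noteq> {}"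
    and hitP: "\<forall>b\<in>B. \<forall>c\<in>B. b \<noteq> c \<longrightarrow> ((b - c) \<union> (c - b)) \<inter> P \<noteq> {}"
    and hitQ: "\<forall>x\<in>X. \<forall>y\<in>X. x \<noteq> y \<longrightarrow> {c\<in>B. (x \<in> c) \<noteq> (y \<in> c)} \<inter> Q \<noteq> {}"
  shows "resolving_set V E (Inl ` P \<union> Inr ` Q)"
  unfolding resolving_set_def
proof (intro conjI ballI impI)
  show "Inl ` P \<union> Inr ` Q \<subseteq> V" using P Q unfolding inc_vertices_def by auto
  define S where "S = Inl ` P \<union> Inr ` Q"
  have SV: "S \<subseteq> V" using P Q unfolding inc_vertices_def S_def by auto
  fix u w assume u: "u \<in> V" and w: "w \<in> V" and uw: "u \<noteq> w"
  show "\<exists>s\<in>Inl ` P \<union> Inr ` Q. d u s \<noteq> d w s"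
  proof (cases "u \<in> S")
    case True thus ?thesis using dne0[OF w u] uw d0[of u] by (intro bexI[of _ u]) (auto simp: S_def)
  next
    case uS: False
    show ?thesis
    proof (cases "w \<in> S")
      case True thus ?thesis using dne0[OF u w] uw d0[of w] by (intro bexI[of _ w]) (auto simp: S_def)
    next
      case wS: False
      from Pne obtain p where p: "p \<in> P" by auto
      have pX: "p \<in> X" using p P by auto
      show ?thesis
      proof (cases u)
        case (Inl x)
        with u have x: "x \<in> X" unfolding inc_vertices_def by auto
        have xP: "x \<notin> P" using uS Inl unfolding S_def by auto
        show ?thesis
        proof (cases w)
          case (Inl y)
          with w have y: "y \<in> X" unfolding inc_vertices_def by auto
          have "x \<noteq> y" using uw Inl \<open>u = Inl x\<close> by auto
          then obtain c where c: "c \<in> B" "c \<in> Q" "(x \<in> c) \<noteq> (y \<in> c)" using hitQ x y by blast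
          have "d (Inl x) (Inr c) \<noteq> d (Inl y) (Inr c)" using dinc1[OF x c(1)] dinc1[OF y c(1)] c(3) by auto
          thus ?thesis using c Inl \<open>u = Inl x\<close> unfolding S_def by auto
        next
          case (Inr b)
          with w have b: "b \<in> B" unfolding inc_vertices_def by auto
          have "x \<noteq> p" using xP p by auto
          hence "d (Inl x) (Inl p) \<noteq> d (Inr b) (Inl p)" using d2[OF x pX] dn2[OF b pX] by auto
          thus ?thesis using p Inr \<open>u = Inl x\<close> unfolding S_def by auto
        qed
      next
        case (Inr b)
        with u have b: "b \<in> B" unfolding inc_vertices_def by auto
        show ?thesis
        proof (cases w)
          case (Inl x)
          with w have x: "x \<in> X" unfolding inc_vertices_def by auto
          have xP: "x \<notin> P" using wS Inl unfolding S_def by auto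
          have "x \<noteq> p" using xP p by auto
          hence "d (Inl x) (Inl p) \<noteq> d (Inr b) (Inl p)" using d2[OF x pX] dn2[OF b pX] by auto
          thus ?thesis using p Inl \<open>u = Inr b\<close> unfolding S_def by (intro bexI[of _ "Inl p"]) auto
        next
          case (Inr c)
          with w have c: "c \<in> B" unfolding inc_vertices_def by auto
          have "b \<noteq> c" using uw Inr \<open>u = Inr b\<close> by auto
          then obtain y where y: "y \<in> P" "(y \<in> b) \<noteq> (y \<in> c)" using hitP b c by blast
          have yX: "y \<in> X" using y P by auto
          have "d (Inr b) (Inl y) \<noteq> d (Inr c) (Inl y)" using dinc2[OF yX b] dinc2[OF yX c] y(2) by auto
          thus ?thesis using y Inr \<open>u = Inr b\<close> unfolding S_def by auto
        qed
      qed
    qed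
  qed
qed

end


lemma final_real:
  fixes v q cP cQ :: real
  assumes v3: "v \<ge> 3" and q: "q > 0" and vq: "v \<le> 5 * q^2"
    and T: "cP + cQ \<le> 2 * (v / q * ln v) + 2"
  shows "cP + cQ \<le> 5 * sqrt (2 * v) * ln (2 * v)"
proof -
  define t where "t = v / q"
  have t0: "t \<ge> 0" using q v3 unfolding t_def by simp
  have "t^2 = v * v / q^2" unfolding t_def by (simp add: power2_eq_square)
  also have "\<dots> \<le> v * (5 * q^2) / q^2" using vq v3 q by (intro divide_right_mono mult_left_mono) auto
  also have "\<dots> = 5 * v" using q by simp
  also have "\<dots> \<le> 4 * (2 * v)" using v3 by simp
  finally have "t \<le> sqrt (4 * (2 * v))" by (rule real_le_rsqrt)
  also have "sqrt (4 * (2 * v)) = 2 * sqrt (2 * v)"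
  proof -
    have "sqrt 4 = (2::real)" using real_sqrt_abs[of 2] by simp
    thus ?thesis by (simp only: real_sqrt_mult)
  qed
  finally have tb: "t \<le> 2 * sqrt (2 * v)" .
  have lnv0: "ln v \<ge> 0" using v3 by simp
  have lnv: "ln v \<le> ln (2 * v)" using v3 by simp
  have "t * ln v \<le> (2 * sqrt (2 * v)) * ln (2 * v)"
    using tb lnv t0 lnv0 v3 by (intro mult_mono) auto
  moreover have "2 \<le> sqrt (2 * v) * ln (2 * v)"
  proof -
    have "sqrt 4 = (2::real)" using real_sqrt_abs[of 2] by simp
    hence s2: "2 \<le> sqrt (2 * v)" using v3 real_sqrt_le_mono[of 4 "2 * v"] by simp
    have "exp 1 \<le> 2 * v" using exp_le v3 by simp
    hence "ln (exp 1) \<le> ln (2 * v)" using v3 by (subst ln_le_cancel_iff) auto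
    hence l1: "1 \<le> ln (2 * v)" by simp
    have "2 * 1 \<le> sqrt (2 * v) * ln (2 * v)" using s2 l1 v3 by (intro mult_mono) auto
    thus ?thesis by simp
  qed
  ultimately show ?thesis using T unfolding t_def by linarith
qed

lemma main_case:
  fixes X :: "'p set" and B :: "'p set set"
  assumes D: "symmetric_design X B v k lam" and kl: "lam + 2 \<le> k" and Bne: "B \<noteq> {}"
  shows "real (metric_dimension (inc_vertices X B) (inc_adj X B))
       \<le> 5 * sqrt (real (2 * v)) * ln (real (2 * v))"
proof -
  note F = design_facts[OF D]
  obtain b0 where b0: "b0 \<in> B" using Bne by auto
  have cb0: "card b0 = k" "b0 \<subseteq> X" using F(4)[OF b0] by auto
  have finb0: "finite b0" using cb0 F(1) finite_subset by auto
  have "b0 \<noteq> {}" using cb0 kl by auto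
  then obtain x0 where x0: "x0 \<in> b0" by auto
  have "card b0 \<ge> 2" using cb0 kl by simp
  moreover have "b0 \<subseteq> {x0} \<Longrightarrow> card b0 \<le> 1" using card_mono[of "{x0}" b0] by simp
  ultimately obtain y0 where y0: "y0 \<in> b0" "y0 \<noteq> x0" by force
  have "b0 \<in> {b\<in>B. x0 \<in> b \<and> y0 \<in> b}" using b0 x0 y0 by auto
  hence "card {b\<in>B. x0 \<in> b \<and> y0 \<in> b} \<ge> 1" using F(7)
    by (metis (no_types, lifting) One_nat_def Suc_leI card_gt_0_iff empty_iff finite_subset mem_Collect_eq subsetI)
  hence lam: "lam \<ge> 1" using F(5)[of x0 y0] x0 y0 cb0 by auto
  interpret des X B v k lam using D lam kl by unfold_locales auto
  have vk: "v \<ge> k" using card_mono[OF F(1) cb0(2)] cb0 F(2) by simp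
  have v3: "v \<ge> 3" using vk kl lam by simp
  have eq: "lam * (v - 1) = k * (k - 1)" using repl_k(2)[OF D lam _ _ x0[THEN subsetD[OF cb0(2)]] b0] vk kl by auto
  have rk: "card {c\<in>B. x \<in> c} = k" if "x \<in> X" for x using repl_k(1)[OF D lam _ _ that b0] vk kl by auto
  define q where "q = k - lam"
  have q2: "q \<ge> 2" using kl unfolding q_def by simp
  have vq: "real v \<le> 5 * (real q)^2"
  proof -
    have "int lam * (int v - 1) = int k * (int k - 1)"
      using eq v3 kl by (metis of_nat_1 of_nat_diff of_nat_mult le_trans one_le_numeral le_add2 order.trans lam)
    hence "int v \<le> 5 * (int k - int lam)^2" using lam kl vk by (intro alg_bound) auto
    moreover have "int k - int lam = int q" unfolding q_def using kl by simp
    ultimately have "int v \<le> 5 * (int q)^2" by simp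
    hence "real_of_int (int v) \<le> real_of_int (5 * (int q)^2)" by linarith
    thus ?thesis by simp
  qed
  define FP where "FP = (\<lambda>(b, c). (b - c) \<union> (c - b)) ` {bc \<in> B \<times> B. fst bc \<noteq> snd bc}"
  define FQ where "FQ = (\<lambda>(x, y). {c\<in>B. (x \<in> c) \<noteq> (y \<in> c)}) ` {xy \<in> X \<times> X. fst xy \<noteq> snd xy}"
  have finFP: "finite FP" unfolding FP_def using F(7) by auto
  have finFQ: "finite FQ" unfolding FQ_def using F(1) by auto
  have cFP: "card FP \<le> v * v"
  proof -
    have "card FP \<le> card {bc \<in> B \<times> B. fst bc \<noteq> snd bc}" unfolding FP_def by (rule card_image_le) (use F(7) in auto)
    also have "\<dots> \<le> card (B \<times> B)" using F(7) by (intro card_mono) auto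
    finally show ?thesis using F(3) by (simp add: card_cartesian_product)
  qed
  have cFQ: "card FQ \<le> v * v"
  proof -
    have "card FQ \<le> card {xy \<in> X \<times> X. fst xy \<noteq> snd xy}" unfolding FQ_def by (rule card_image_le) (use F(1) in auto)
    also have "\<dots> \<le> card (X \<times> X)" using F(1) by (intro card_mono) auto
    finally show ?thesis using F(2) by (simp add: card_cartesian_product)
  qed
  have "card B \<ge> 2" using v3 F(3) by simp
  then obtain c0 where c0: "c0 \<in> B" "c0 \<noteq> b0"
    using card_mono[of "{b0}" B] F(7) by (metis card_1_singleton_iff insertI1 insert_absorb insert_subset le_antisym
        not_numeral_le_zero numeral_le_one_iff one_le_numeral semiring_norm(69) subsetI card.empty empty_iff
        is_singletonI' is_singleton_altdef le_trans)
  have FPne: "FP \<noteq> {}" unfolding FP_def using b0 c0 by auto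
  have FQne: "FQ \<noteq> {}" unfolding FQ_def using x0 y0 cb0 by auto
  have FPs: "\<forall>A\<in>FP. A \<subseteq> X \<and> 2 * q \<le> card A"
  proof
    fix A assume "A \<in> FP"
    then obtain bc where bc0: "bc \<in> {bc \<in> B \<times> B. fst bc \<noteq> snd bc}" "A = (\<lambda>(b, c). (b - c) \<union> (c - b)) bc"
      unfolding FP_def by blast
    obtain b c where "bc = (b, c)" by (cases bc)
    hence bc: "b \<in> B" "c \<in> B" "b \<noteq> c" "A = (b - c) \<union> (c - b)" using bc0 by auto
    have fb: "finite b" "finite c" using bc F(4) F(1) finite_subset by metis+
    have "card (b - c) = k - lam" using card_Diff_subset_Int[of b c] fb F(4)[OF bc(1)] F(6)[OF bc(1-3)] by simp
    moreover have "card (c - b) = k - lam" using card_Diff_subset_Int[of c b] fb F(4)[OF bc(2)] F(6)[OF bc(1-3)]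
      by (simp add: Int_commute)
    moreover have "card A = card (b - c) + card (c - b)" unfolding bc(4) using fb by (intro card_Un_disjoint) auto
    ultimately show "A \<subseteq> X \<and> 2 * q \<le> card A" using bc F(4) unfolding q_def by auto
  qed
  have FQs: "\<forall>A\<in>FQ. A \<subseteq> B \<and> 2 * q \<le> card A"
  proof
    fix A assume "A \<in> FQ"
    then obtain xy where xy0: "xy \<in> {xy \<in> X \<times> X. fst xy \<noteq> snd xy}" "A = (\<lambda>(x, y). {c\<in>B. (x \<in> c) \<noteq> (y \<in> c)}) xy"
      unfolding FQ_def by blast
    obtain x y where "xy = (x, y)" by (cases xy)
    hence xy: "x \<in> X" "y \<in> X" "x \<noteq> y" "A = {c\<in>B. (x \<in> c) \<noteq> (y \<in> c)}" using xy0 by auto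
    define Bx where "Bx = {c\<in>B. x \<in> c}"
    define By where "By = {c\<in>B. y \<in> c}"
    have fin: "finite Bx" "finite By" unfolding Bx_def By_def using F(7) by auto
    have finI: "finite {c\<in>B. x \<in> c \<and> y \<in> c}" using F(7) by auto
    have I: "Bx \<inter> By = {c\<in>B. x \<in> c \<and> y \<in> c}" unfolding Bx_def By_def by auto
    have "card (Bx - By) = k - lam" using card_Diff_subset_Int[of Bx By] fin rk[OF xy(1)] F(5)[OF xy(1-3)] I finI
      unfolding Bx_def by simp
    moreover have "card (By - Bx) = k - lam" using card_Diff_subset_Int[of By Bx] fin rk[OF xy(2)] F(5)[OF xy(1-3)] I finI
      unfolding By_def by (simp add: Int_commute)
    moreover have "A = (Bx - By) \<union> (By - Bx)" unfolding xy(4) Bx_def By_def by auto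
    moreover have "card ((Bx - By) \<union> (By - Bx)) = card (Bx - By) + card (By - Bx)" using fin by (intro card_Un_disjoint) auto
    ultimately show "A \<subseteq> B \<and> 2 * q \<le> card A" using xy unfolding q_def by auto
  qed
  have m0: "2 * q > 0" using q2 by simp
  obtain P where P: "P \<subseteq> X" "\<forall>A\<in>FP. A \<inter> P \<noteq> {}"
    "real (card P) \<le> real (card X) / real (2 * q) * ln (real (card FP)) + 1"
    using hitting[OF F(1) m0 finFP FPne FPs] by blast
  obtain Q where Q: "Q \<subseteq> B" "\<forall>A\<in>FQ. A \<inter> Q \<noteq> {}"
    "real (card Q) \<le> real (card B) / real (2 * q) * ln (real (card FQ)) + 1"
    using hitting[OF F(7) m0 finFQ FQne FQs] by blast
  have Pne: "P \<noteq> {}" using P(2) FPne by auto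
  have hitP: "\<forall>b\<in>B. \<forall>c\<in>B. b \<noteq> c \<longrightarrow> ((b - c) \<union> (c - b)) \<inter> P \<noteq> {}"
  proof (intro ballI impI)
    fix b c assume "b \<in> B" "c \<in> B" "b \<noteq> c"
    hence "(b - c) \<union> (c - b) \<in> FP" unfolding FP_def by (intro image_eqI[of _ _ "(b, c)"]) auto
    thus "((b - c) \<union> (c - b)) \<inter> P \<noteq> {}" using P(2) by blast
  qed
  have hitQ: "\<forall>x\<in>X. \<forall>y\<in>X. x \<noteq> y \<longrightarrow> {c\<in>B. (x \<in> c) \<noteq> (y \<in> c)} \<inter> Q \<noteq> {}"
  proof (intro ballI impI)
    fix x y assume "x \<in> X" "y \<in> X" "x \<noteq> y"
    hence "{c\<in>B. (x \<in> c) \<noteq> (y \<in> c)} \<in> FQ" unfolding FQ_def by (intro image_eqI[of _ _ "(x, y)"]) auto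
    thus "{c\<in>B. (x \<in> c) \<noteq> (y \<in> c)} \<inter> Q \<noteq> {}" using Q(2) by blast
  qed
  define S where "S = Inl ` P \<union> Inr ` Q"
  have res: "resolving_set (inc_vertices X B) (inc_adj X B) S"
    unfolding S_def using resolving[OF P(1) Q(1) Pne hitP hitQ] .
  have finP: "finite P" using P(1) F(1) by (rule finite_subset)
  have finQ: "finite Q" using Q(1) F(7) by (rule finite_subset)
  have finS: "finite S" unfolding S_def using finP finQ by simp
  have md: "metric_dimension (inc_vertices X B) (inc_adj X B) \<le> card S"
    unfolding metric_dimension_def using res finS by (intro Least_le) auto
  have cS: "card S \<le> card P + card Q" unfolding S_def
    by (meson add_mono card_image_le card_Un_le finP finQ order_trans)
  have lnvv: "ln (real (card A)) \<le> 2 * ln (real v)" if "card A \<le> v * v" "A \<noteq> {}" "finite A" for A :: "'x set"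
  proof -
    have "card A > 0" using that by (simp add: card_gt_0_iff)
    hence "ln (real (card A)) \<le> ln (real v * real v)" using that v3
      by (subst ln_le_cancel_iff) (auto simp flip: of_nat_mult)
    also have "\<dots> = 2 * ln (real v)" using v3 by (simp add: ln_mult)
    finally show ?thesis .
  qed
  have coef: "real v / real (2 * q) \<ge> 0" by simp
  have bP: "real (card P) \<le> real v / real (2 * q) * (2 * ln (real v)) + 1"
    using P(3)[unfolded F(2)] mult_left_mono[OF lnvv[OF cFP FPne finFP] coef] by linarith
  have bQ: "real (card Q) \<le> real v / real (2 * q) * (2 * ln (real v)) + 1"
    using Q(3)[unfolded F(3)] mult_left_mono[OF lnvv[OF cFQ FQne finFQ] coef] by linarith
  define w where "w = real v / real q * ln (real v)"
  have eqw: "real v / real (2 * q) * (2 * ln (real v)) = w"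
    using q2 unfolding w_def by simp
  have bP': "real (card P) \<le> w + 1" using bP unfolding eqw .
  have bQ': "real (card Q) \<le> w + 1" using bQ unfolding eqw .
  have T0: "real (card P) + real (card Q) \<le> 2 * w + 2"
    using bP' bQ' by linarith
  have T: "real (card P) + real (card Q) \<le> 2 * (real v / real q * ln (real v)) + 2"
    using T0 unfolding w_def .
  have "real (card P) + real (card Q) \<le> 5 * sqrt (2 * real v) * ln (2 * real v)"
    using final_real[OF _ _ vq T] v3 q2 by simp
  moreover have "real (metric_dimension (inc_vertices X B) (inc_adj X B)) \<le> real (card P) + real (card Q)"
    using md cS by linarith
  ultimately show ?thesis by simp
qed


theorem corollary2p7:
  "\<exists>C::real. \<forall>(X::nat set) (B::nat set set) v k lam.
     symmetric_design X B v k lam \<and> k \<ge> lam + 2 \<longrightarrow>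
     real (metric_dimension (inc_vertices X B) (inc_adj X B))
       \<le> C * sqrt (real (2 * v)) * ln (real (2 * v))"
proof (intro exI[of _ 5] allI impI, elim conjE)
  fix X :: "nat set" and B :: "nat set set" and v k lam :: nat
  assume D: "symmetric_design X B v k lam" and kl: "k \<ge> lam + 2"
  show "real (metric_dimension (inc_vertices X B) (inc_adj X B))
       \<le> 5 * sqrt (real (2 * v)) * ln (real (2 * v))"
  proof (cases "B = {}")
    case False
    thus ?thesis using main_case[OF D _ False] kl by simp
  next
    case True
    note F = design_facts[OF D]
    have v0: "v = 0" using F(3) True by simp
    have X0: "X = {}" using F(1) F(2) v0 by simp
    have V0: "inc_vertices X B = {}" unfolding inc_vertices_def using True X0 by simp
    have "metric_dimension (inc_vertices X B) (inc_adj X B) \<le> 0"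
      unfolding metric_dimension_def V0
      by (rule Least_le) (rule exI[of _ "{}"], simp add: resolving_set_def)
    thus ?thesis using v0 by simp
  qed
qed

end
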